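(* Let $\sigma\subseteq \overline{M}_{\mathbb R}$ be a reflexive Gorenstein cone of index $r$, and let $\overline N^{(r)}:=\overline N+\frac1r\mathbb Z\, n_\sigma\subseteq \overline N_{\mathbb R}$. Let $\rho$ be a facet of the dual cone $\sigma^\vee$ and let $\mathrm{lin}(\rho)$ be its linear span. Then \[\mathrm{lin}(\rho)\cap \overline N=\mathrm{lin}(\rho)\cap \overline N^{(r)}.\] In particular $\partial\sigma^\vee\cap\overline N=\partial\sigma^\vee\cap \overline N^{(r)}$.
   Context: $\overline M\cong\mathbb Z^{\bar d}$ and $\overline N=\mathrm{Hom}(\overline M,\mathbb Z)$ are dual lattices with pairing $\langle\cdot,\cdot\rangle$, $\overline M_{\mathbb R}=\overline M\otimes\mathbb R$, $\overline N_{\mathbb R}=\overline N\otimes\mathbb R$. For a full-dimensional rational polyhedral cone $\sigma\subseteq\overline M_{\mathbb R}$, its dual cone is $\sigma^\vee=\{y\in\overline N_{\mathbb R}:\langle x,y\rangle\ge0\ \forall x\in\sigma\}$. Such a cone $\sigma$ is a Gorenstein cone if it is generated by finitely many lattice points all lying in an affine hyperplane $\{x:\langle x,n\rangle=1\}$ for some $n\in\overline N$; this $n$ is unique and is denoted $n_\sigma$. The support of $\sigma$ is $\sigma\cap\{x:\langle x,n_\sigma\rangle=1\}$, a lattice polytope with respect to the affine lattice $\overline M\cap\{\langle x,n_\sigma\rangle=1\}$. $\sigma$ is a reflexive Gorenstein cone if $\sigma^\vee$ is also a Gorenstein cone; then $m_{\sigma^\vee}\in\overline M$ denotes the point with $\langle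 m_{\sigma^\vee},y\rangle=1$ for all lattice generators $y$ of $\sigma^\vee$, and the index of $\sigma$ is $r=\langle m_{\sigma^\vee},n_\sigma\rangle$. *)

theory Defs
  imports "HOL-Analysis.Analysis"
begin

text \<open>Both lattices M-bar and N-bar are identified with the integer points of
  real^'n (dual bases), the pairing being the standard inner product.\<close>

definition lattice_pts :: "(real^'n) set" where
  "lattice_pts = {x. \<forall>i. x $ i \<in> \<int>}"

definition cone_gen :: "(real^'n) set \<Rightarrow> (real^'n) set" where
  "cone_gen G = {\<Sum>g\<in>G. c g *\<^sub>R g | c. \<forall>g\<in>G. 0 \<le> c g}"

definition dual_cone :: "(real^'n) set \<Rightarrow> (real^'n) set" where
  "dual_cone S = {y. \<forall>x\<in>S. 0 \<le> x \<bullet> y}"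

text \<open>sigma is a (full-dimensional) Gorenstein cone and n is its distinguished
  lattice point n_sigma (which is then unique).\<close>
definition gorenstein_wrt :: "(real^'n) set \<Rightarrow> real^'n \<Rightarrow> bool" where
  "gorenstein_wrt \<sigma> n \<longleftrightarrow> n \<in> lattice_pts \<and> interior \<sigma> \<noteq> {} \<and>
     (\<exists>G. finite G \<and> G \<subseteq> lattice_pts \<and> (\<forall>g\<in>G. g \<bullet> n = 1) \<and> \<sigma> = cone_gen G)"

definition lattice_r :: "real \<Rightarrow> real^'n \<Rightarrow> (real^'n) set" where
  "lattice_r r n = {y + (of_int k / r) *\<^sub>R n | y k. y \<in> lattice_pts}"

end

theory Submission
  imports Defs
begin

lemma dual_eq:
  assumes "finite G"
  shows "dual_cone (cone_gen G) = {y. \<forall>g\<in>G. 0 \<le> g \<bullet> y}"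
proof
  show "dual_cone (cone_gen G) \<subseteq> {y. \<forall>g\<in>G. 0 \<le> g \<bullet> y}"
  proof
    fix y assume y: "y \<in> dual_cone (cone_gen G)"
    have "g \<in> cone_gen G" if "g \<in> G" for g
    proof -
      have "(\<Sum>h\<in>G. (if h = g then 1 else 0) *\<^sub>R h) = g"
      proof -
        have "(\<Sum>h\<in>G. (if h = g then 1 else 0) *\<^sub>R h) = (\<Sum>h\<in>G. if h = g then h else 0)"
          by (rule sum.cong) auto
        also have "\<dots> = g" using that assms by (simp add: sum.delta)
        finally show ?thesis .
      qed
      then show ?thesis unfolding cone_gen_def
        by (intro CollectI exI[of _ "\<lambda>h. if h = g then 1 else 0"]) auto
    qed
    then show "y \<in> {y. \<forall>g\<in>G. 0 \<le> g \<bullet> y}" using y by (auto simp: dual_cone_def)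
  qed
next
  show "{y. \<forall>g\<in>G. 0 \<le> g \<bullet> y} \<subseteq> dual_cone (cone_gen G)"
    by (auto simp: dual_cone_def cone_gen_def inner_sum_left intro!: sum_nonneg)
qed

lemma nonint_zero:
  assumes "finite G" and "z \<in> dual_cone (cone_gen G)" and "z \<notin> interior (dual_cone (cone_gen G))"
  shows "\<exists>g\<in>G. g \<bullet> z = 0"
proof (rule ccontr)
  assume "\<not> ?thesis"
  then have pos: "\<forall>g\<in>G. 0 < g \<bullet> z" using assms(2) dual_eq[OF assms(1)]
    by (metis (mono_tags, lifting) mem_Collect_eq order_le_less)
  define U where "U = (\<Inter>g\<in>G. {y. g \<bullet> y > 0})"
  have "open U" unfolding U_def using assms(1)
    by (intro open_INT) (auto simp: open_halfspace_gt)
  moreover have "z \<in> U" using pos by (auto simp: U_def)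
  moreover have "U \<subseteq> dual_cone (cone_gen G)"
    using dual_eq[OF assms(1)] by (auto simp: U_def less_imp_le)
  ultimately have "z \<in> interior (dual_cone (cone_gen G))"
    by (meson interiorI)
  with assms(3) show False by simp
qed

lemma int_inner:
  assumes "g \<in> lattice_pts" "y \<in> lattice_pts"
  shows "g \<bullet> y \<in> \<int>"
  using assms unfolding lattice_pts_def inner_vec_def
  by (auto intro!: Ints_sum Ints_mult)

lemma key:
  assumes g: "g \<in> lattice_pts" "g \<bullet> n = 1" and n: "n \<in> lattice_pts"
    and z: "z \<in> lattice_r r n" and gz: "g \<bullet> z = 0"
  shows "z \<in> lattice_pts"
proof -
  obtain y k where y: "y \<in> lattice_pts" and zd: "z = y + (of_int k / r) *\<^sub>R n"
    using z unfolding lattice_r_def by blast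
  have "g \<bullet> z = g \<bullet> y + of_int k / r" using g(2) zd by (simp add: inner_add_right)
  then have "of_int k / r = - (g \<bullet> y)" using gz by simp
  then have "of_int k / r \<in> \<int>" using int_inner[OF g(1) y] by simp
  then show ?thesis using y n zd unfolding lattice_pts_def
    by (auto intro!: Ints_add) (metis Ints_mult times_divide_eq_left mult.commute)
qed

lemma sub_r: "lattice_pts \<subseteq> lattice_r r n"
  unfolding lattice_r_def by (auto intro!: exI[of _ "0::int"])

theorem proposition1p12:
  fixes \<sigma> :: "(real^'n) set" and n m :: "real^'n" and r :: real
  assumes "gorenstein_wrt \<sigma> n"
    and "gorenstein_wrt (dual_cone \<sigma>) m"
    and "r = m \<bullet> n"
  shows "(\<forall>\<rho>. \<rho> facet_of (dual_cone \<sigma>) \<longrightarrow>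
            span \<rho> \<inter> lattice_pts = span \<rho> \<inter> lattice_r r n)
       \<and> frontier (dual_cone \<sigma>) \<inter> lattice_pts = frontier (dual_cone \<sigma>) \<inter> lattice_r r n"
proof -
  obtain G where G: "finite G" "G \<subseteq> lattice_pts" "\<forall>g\<in>G. g \<bullet> n = 1" "\<sigma> = cone_gen G"
    and n: "n \<in> lattice_pts"
    using assms(1) unfolding gorenstein_wrt_def by blast
  let ?D = "dual_cone \<sigma>"
  have D: "?D = {y. \<forall>g\<in>G. 0 \<le> g \<bullet> y}" using dual_eq[OF G(1)] G(4) by simp
  have convD: "convex ?D" unfolding D convex_def
    by (auto simp: inner_add_right intro!: add_nonneg_nonneg mult_nonneg_nonneg)
  have closedD: "closed ?D"
  proof -
    have "?D = (\<Inter>g\<in>G. {y. g \<bullet> y \<ge> 0})" unfolding D by auto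
    then show ?thesis by (auto intro!: closed_INT simp: closed_halfspace_ge)
  qed
  have P1: "span \<rho> \<inter> lattice_pts = span \<rho> \<inter> lattice_r r n" if f: "\<rho> facet_of ?D" for \<rho>
  proof -
    have face: "\<rho> face_of ?D" and ne: "\<rho> \<noteq> {}" and neq: "\<rho> \<noteq> ?D"
      using f unfolding facet_of_def by auto
    have cr: "convex \<rho>" using face face_of_imp_convex by blast
    obtain z where zr: "z \<in> rel_interior \<rho>"
      using rel_interior_eq_empty[OF cr] ne by blast
    have zrho: "z \<in> \<rho>" using zr rel_interior_subset by blast
    have sub: "\<rho> \<subseteq> ?D" using face face_of_imp_subset by blast
    have "z \<notin> interior ?D" using face_of_disjoint_interior[OF face neq] zrho by blast
    then obtain g where g: "g \<in> G" "g \<bullet> z = 0"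
      using nonint_zero[OF G(1)] zrho sub G(4) by blast
    have hf: "(?D \<inter> {x. (-g) \<bullet> x = 0}) face_of ?D"
      by (rule face_of_Int_supporting_hyperplane_le[OF convD]) (use g D in auto)
    have "\<rho> \<subseteq> ?D \<inter> {x. (-g) \<bullet> x = 0}"
      by (rule subset_of_face_of[OF hf sub]) (use zr g sub rel_interior_subset in auto)
    then have "\<rho> \<subseteq> {x. g \<bullet> x = 0}" by auto
    then have "span \<rho> \<subseteq> {x. g \<bullet> x = 0}" by (rule span_minimal[OF _ subspace_hyperplane])
    then show ?thesis using key[of g n] g G n sub_r[of r n] by blast
  qed
  have P2: "frontier ?D \<inter> lattice_pts = frontier ?D \<inter> lattice_r r n"
  proof -
    have "z \<in> lattice_pts" if z: "z \<in> frontier ?D" "z \<in> lattice_r r n" for z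
    proof -
      have "z \<in> ?D" "z \<notin> interior ?D" using z closedD by (auto simp: frontier_def)
      then obtain g where g: "g \<in> G" "g \<bullet> z = 0"
        using nonint_zero[OF G(1)] G(4) by blast
      then show ?thesis using key[of g n z r] G n z by blast
    qed
    then show ?thesis using sub_r[of r n] by blast
  qed
  show ?thesis using P1 P2 by blast
qed

end
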